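(* Let $A$ be a finite set of options and consider $V\ge1$ votes, each a truncated ranking with possible ties, interpreted as in the context, with Llull matrix $v$. Let $T$ be the set of path-top choices of $v$. If $x,y\in A$, $x$ dominates $y$ in the sense of Pareto, and $y\in T$, then $x\in T$.
   Context: A truncated ranking with ties is a weak order on a subset of $A$ (the ranked options); for ranked options, $x$ is preferred to $y$ if strictly above, and ranked equally if tied; every ranked option is preferred to every unranked option; two unranked options are not compared. Llull matrix: $v_{xy}=(\#\{\text{votes preferring }x\text{ to }y\}+\tfrac12\#\{\text{votes ranking }x,y\text{ equally}\})/V$. Path scores: $v^*_{xy}=\max\min(v_{x_0x_1},\dots,v_{x_{m-1}x_m})$ over all paths $x_0\dots x_m$ ($m\ge1$, $x_0=x$, $x_m=y$, $x_i$ pairwise distinct). Ranking relation: $x\succeq y$ iff there is a path $x_0\dots x_m$ from $x$ to $y$ with $v^*_{x_ix_{i+1}}\ge v^*_{x_{i+1}x_i}$ for all $i<m$. $x$ is a path-top choice if $x\succeq z$ for all $z\ne x$. $x$ dominates $y$ in the sense of Pareto if every vote either prefers $x$ to $y$ or ranks them equally, and at least one vote prefers $x$ to $y$. *)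

theory Defs
  imports Complex_Main
begin

text \<open>A vote (truncated ranking with ties) is a relation R on options: (x,y) in R means
 x is ranked at least as high as y.\<close>

definition ranked :: "('a \<times> 'a) set \<Rightarrow> 'a set" where
  "ranked R = {x. (x, x) \<in> R}"

definition truncated_ranking :: "'a set \<Rightarrow> ('a \<times> 'a) set \<Rightarrow> bool" where
  "truncated_ranking A R \<longleftrightarrow> ranked R \<subseteq> A \<and> R \<subseteq> ranked R \<times> ranked R
     \<and> refl_on (ranked R) R \<and> trans R \<and> total_on (ranked R) R"

definition prefers :: "('a \<times> 'a) set \<Rightarrow> 'a \<Rightarrow> 'a \<Rightarrow> bool" where
  "prefers R x y \<longleftrightarrow>
     (x \<in> ranked R \<and> y \<in> ranked R \<and> (x, y) \<in> R \<and> (y, x) \<notin> R)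
     \<or> (x \<in> ranked R \<and> y \<notin> ranked R)"

definition ties :: "('a \<times> 'a) set \<Rightarrow> 'a \<Rightarrow> 'a \<Rightarrow> bool" where
  "ties R x y \<longleftrightarrow> x \<in> ranked R \<and> y \<in> ranked R \<and> (x, y) \<in> R \<and> (y, x) \<in> R"

definition llull :: "('a \<times> 'a) set list \<Rightarrow> 'a \<Rightarrow> 'a \<Rightarrow> real" where
  "llull vs x y = (real (length (filter (\<lambda>R. prefers R x y) vs))
      + real (length (filter (\<lambda>R. ties R x y) vs)) / 2) / real (length vs)"

definition is_path :: "'a set \<Rightarrow> 'a list \<Rightarrow> 'a \<Rightarrow> 'a \<Rightarrow> bool" where
  "is_path A xs x y \<longleftrightarrow> length xs \<ge> 2 \<and> distinct xs \<and> set xs \<subseteq> A \<and> hd xs = x \<and> last xs = y"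

definition path_strength :: "('a \<Rightarrow> 'a \<Rightarrow> real) \<Rightarrow> 'a list \<Rightarrow> real" where
  "path_strength v xs = Min {v (xs ! i) (xs ! Suc i) | i. Suc i < length xs}"

definition path_score :: "'a set \<Rightarrow> ('a \<Rightarrow> 'a \<Rightarrow> real) \<Rightarrow> 'a \<Rightarrow> 'a \<Rightarrow> real" where
  "path_score A v x y = Max {path_strength v xs | xs. is_path A xs x y}"

definition ranks_geq :: "'a set \<Rightarrow> ('a \<Rightarrow> 'a \<Rightarrow> real) \<Rightarrow> 'a \<Rightarrow> 'a \<Rightarrow> bool" where
  "ranks_geq A v x y \<longleftrightarrow> (\<exists>xs. is_path A xs x y \<and>
     (\<forall>i. Suc i < length xs \<longrightarrow>
        path_score A v (xs ! i) (xs ! Suc i) \<ge> path_score A v (xs ! Suc i) (xs ! i)))"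

definition path_top_choices :: "'a set \<Rightarrow> ('a \<Rightarrow> 'a \<Rightarrow> real) \<Rightarrow> 'a set" where
  "path_top_choices A v = {x \<in> A. \<forall>z \<in> A. z \<noteq> x \<longrightarrow> ranks_geq A v x z}"

definition pareto_dominates :: "('a \<times> 'a) set list \<Rightarrow> 'a \<Rightarrow> 'a \<Rightarrow> bool" where
  "pareto_dominates vs x y \<longleftrightarrow> (\<forall>R \<in> set vs. prefers R x y \<or> ties R x y)
     \<and> (\<exists>R \<in> set vs. prefers R x y)"

end

theory Submission
  imports Defs
begin

definition cv :: "('a \<times> 'a) set \<Rightarrow> 'a \<Rightarrow> 'a \<Rightarrow> real" where
  "cv R a b = (if prefers R a b then 1 else 0) + (if ties R a b then 1/2 else 0)"

lemma count_sum: "real (length (filter P vs)) + real (length (filter Q vs)) / 2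
   = sum_list (map (\<lambda>R. (if P R then 1 else 0) + (if Q R then 1/2 else 0)) vs)"
  by (induction vs) (auto simp: field_simps)

lemma llull_cv: "llull vs a b = sum_list (map (\<lambda>R. cv R a b) vs) / real (length vs)"
  unfolding llull_def cv_def using count_sum[of "\<lambda>R. prefers R a b" vs "\<lambda>R. ties R a b"] by simp

lemma excl: "\<not> (prefers R a b \<and> ties R a b)"
  unfolding prefers_def ties_def by blast

lemma cv_cases: "cv R a b = (if prefers R a b then 1 else if ties R a b then 1/2 else 0)"
  using excl[of R a b] unfolding cv_def by auto

lemma cv_le:
  assumes "prefers R a b \<Longrightarrow> prefers R c d"
    and "ties R a b \<Longrightarrow> prefers R c d \<or> ties R c d"
  shows "cv R a b \<le> cv R c d"
  using assms unfolding cv_cases by (auto split: if_splits)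

context
  fixes A R x y
  assumes tr: "truncated_ranking A R" and d: "prefers R x y \<or> ties R x y"
begin

lemma tR: "trans R" and sub: "R \<subseteq> ranked R \<times> ranked R" and tot: "total_on (ranked R) R"
  using tr unfolding truncated_ranking_def by auto

lemma rk: "a \<in> ranked R \<longleftrightarrow> (a, a) \<in> R" unfolding ranked_def by simp

lemma xr: "x \<in> ranked R" and xy: "y \<in> ranked R \<Longrightarrow> (x, y) \<in> R"
  using d unfolding prefers_def ties_def by auto

lemma tot': "a \<in> ranked R \<Longrightarrow> b \<in> ranked R \<Longrightarrow> (a, b) \<in> R \<or> (b, a) \<in> R"
  using tot rk unfolding total_on_def by metis

lemma inR: "(a, b) \<in> R \<Longrightarrow> a \<in> ranked R \<and> b \<in> ranked R" using sub by auto

lemma cv_left: "cv R y z \<le> cv R x z"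
proof (rule cv_le)
  show "prefers R y z \<Longrightarrow> prefers R x z"
    unfolding prefers_def using xr xy tR tot' inR unfolding trans_def by metis
  show "ties R y z \<Longrightarrow> prefers R x z \<or> ties R x z"
    unfolding prefers_def ties_def using xr xy tR tot' inR unfolding trans_def by metis
qed

lemma cv_right: "cv R z x \<le> cv R z y"
proof (rule cv_le)
  show "prefers R z x \<Longrightarrow> prefers R z y"
    unfolding prefers_def using xr xy tR tot' inR unfolding trans_def by metis
  show "ties R z x \<Longrightarrow> prefers R z y \<or> ties R z y"
    unfolding prefers_def ties_def using xr xy tR tot' inR unfolding trans_def by metis
qed

lemma cv_xy: "cv R y x \<le> cv R x y"
proof (rule cv_le)
  show "prefers R y x \<Longrightarrow> prefers R x y"
    unfolding prefers_def using xr xy tR tot' inR unfolding trans_def by metis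
  show "ties R y x \<Longrightarrow> prefers R x y \<or> ties R x y"
    using d unfolding prefers_def ties_def by blast
qed

end


context
  fixes A :: "'a set" and vs :: "('a \<times> 'a) set list" and x y :: 'a
  assumes H: "\<forall>R \<in> set vs. truncated_ranking A R \<and> (prefers R x y \<or> ties R x y)"
begin

lemma ll_mono:
  assumes "\<And>R. R \<in> set vs \<Longrightarrow> cv R a b \<le> cv R c d"
  shows "llull vs a b \<le> llull vs c d"
proof -
  have "sum_list (map (\<lambda>R. cv R a b) vs) \<le> sum_list (map (\<lambda>R. cv R c d) vs)"
    by (rule sum_list_mono) (rule assms)
  then show ?thesis unfolding llull_cv by (rule divide_right_mono) simp
qed

lemma ll_left: "llull vs y z \<le> llull vs x z"
proof (rule ll_mono)
  fix R assume "R \<in> set vs"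
  then have "truncated_ranking A R" "prefers R x y \<or> ties R x y" using H by auto
  then show "cv R y z \<le> cv R x z" by (rule cv_left)
qed
lemma ll_right: "llull vs z x \<le> llull vs z y"
proof (rule ll_mono)
  fix R assume "R \<in> set vs"
  then have "truncated_ranking A R" "prefers R x y \<or> ties R x y" using H by auto
  then show "cv R z x \<le> cv R z y" by (rule cv_right)
qed
lemma ll_xy: "llull vs y x \<le> llull vs x y"
proof (rule ll_mono)
  fix R assume "R \<in> set vs"
  then have "truncated_ranking A R" "prefers R x y \<or> ties R x y" using H by auto
  then show "cv R y x \<le> cv R x y" by (rule cv_xy)
qed

end

lemma paths_finite:
  assumes "finite A" shows "finite {xs. is_path A xs a b}"
proof (rule finite_subset[OF _ finite_lists_length_le[OF assms, of "card A"]])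
  show "{xs. is_path A xs a b} \<subseteq> {xs. set xs \<subseteq> A \<and> length xs \<le> card A}"
  proof
    fix xs assume "xs \<in> {xs. is_path A xs a b}"
    then have d: "distinct xs" and s: "set xs \<subseteq> A" unfolding is_path_def by auto
    have "length xs = card (set xs)" using distinct_card[OF d] by simp
    also have "\<dots> \<le> card A" using card_mono[OF assms s] .
    finally show "xs \<in> {xs. set xs \<subseteq> A \<and> length xs \<le> card A}" using s by simp
  qed
qed

lemma strength_le_score:
  assumes "finite A" "is_path A xs a b"
  shows "path_strength v xs \<le> path_score A v a b"
  unfolding path_score_def using paths_finite[OF assms(1), of a b] assms(2)
  by (intro Max_ge) auto

lemma score_attained:
  assumes "finite A" "is_path A xs a b"
  shows "\<exists>ys. is_path A ys a b \<and> path_score A v a b = path_strength v ys"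
proof -
  have "finite {path_strength v xs | xs. is_path A xs a b}"
    using paths_finite[OF assms(1), of a b] by simp
  moreover have "{path_strength v xs | xs. is_path A xs a b} \<noteq> {}" using assms(2) by auto
  ultimately have "path_score A v a b \<in> {path_strength v xs | xs. is_path A xs a b}"
    unfolding path_score_def by (rule Max_in)
  then show ?thesis by auto
qed


lemma edges_eq: "{v (xs ! i) (xs ! Suc i) | i. Suc i < length xs} = (\<lambda>i. v (xs ! i) (xs ! Suc i)) ` {i. Suc i < length xs}"
  by auto

lemma edges_fin: "finite {v (xs ! i) (xs ! Suc i) | i. Suc i < length xs}"
proof -
  have "{i. Suc i < length xs} \<subseteq> {..<length xs}" by auto
  then have "finite {i. Suc i < length xs}" using finite_subset by blast
  then show ?thesis unfolding edges_eq by simp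
qed

lemma swap_path:
  fixes v :: "'a \<Rightarrow> 'a \<Rightarrow> real"
  assumes xA: "x \<in> A" and yA: "y \<in> A" and xy: "x \<noteq> y"
    and L: "\<And>z. v y z \<le> v x z" and Rr: "\<And>z. v z x \<le> v z y" and X: "v y x \<le> v x y"
    and P: "is_path A ps y x"
  shows "\<exists>qs. is_path A qs x y \<and> path_strength v ps \<le> path_strength v qs"
proof -
  define f where "f = (\<lambda>a. if a = x then y else if a = y then x else a)"
  define qs where "qs = map f ps"
  have len: "length ps \<ge> 2" and dist: "distinct ps" and sA: "set ps \<subseteq> A"
    and h: "hd ps = y" and l: "last ps = x" using P unfolding is_path_def by auto
  have ne: "ps \<noteq> []" using len by auto
  have p0: "ps ! 0 = y" using h ne by (simp add: hd_conv_nth)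
  have pl: "ps ! (length ps - 1) = x" using l ne by (simp add: last_conv_nth)
  have injf: "inj f" unfolding f_def inj_def by auto
  have "is_path A qs x y"
  proof -
    have "distinct qs" unfolding qs_def using dist inj_on_subset[OF injf subset_UNIV]
      by (simp add: distinct_map)
    moreover have "set qs \<subseteq> A" unfolding qs_def using sA xA yA by (auto simp: f_def)
    moreover have "hd qs = x" unfolding qs_def using ne h xy by (simp add: hd_map f_def)
    moreover have "last qs = y" unfolding qs_def using ne l by (simp add: last_map f_def)
    moreover have "length qs \<ge> 2" unfolding qs_def using len by simp
    ultimately show ?thesis unfolding is_path_def by blast
  qed
  moreover
  have edge: "v (ps ! i) (ps ! Suc i) \<le> v (qs ! i) (qs ! Suc i)" if i: "Suc i < length ps" for i
  proof -
    have a: "ps ! i \<noteq> x"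
    proof
      assume "ps ! i = x"
      then have "ps ! i = ps ! (length ps - 1)" using pl by simp
      moreover have i1: "i < length ps" "length ps - 1 < length ps" using i by auto
      moreover have "(ps ! i = ps ! (length ps - 1)) = (i = length ps - 1)"
        using nth_eq_iff_index_eq[OF dist i1] .
      ultimately have "i = length ps - 1" by blast
      then show False using i by simp
    qed
    have b: "ps ! Suc i \<noteq> y"
    proof
      assume "ps ! Suc i = y"
      then have "ps ! Suc i = ps ! 0" using p0 by simp
      moreover have j0: "0 < length ps" using i by linarith
      moreover have "(ps ! Suc i = ps ! 0) = (Suc i = 0)" using nth_eq_iff_index_eq[OF dist i j0] .
      ultimately have "Suc i = 0" by blast
      then show False by simp
    qed
    have q: "qs ! i = f (ps ! i)" "qs ! Suc i = f (ps ! Suc i)" using i unfolding qs_def by auto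
    show ?thesis
    proof (cases "ps ! i = y")
      case True
      show ?thesis
      proof (cases "ps ! Suc i = x")
        case True2: True
        show ?thesis unfolding q f_def using True True2 X xy by simp
      next
        case False
        show ?thesis unfolding q f_def using True False b L[of "ps ! Suc i"] xy by simp
      qed
    next
      case False
      show ?thesis
      proof (cases "ps ! Suc i = x")
        case True2: True
        show ?thesis unfolding q f_def using False True2 a Rr[of "ps ! i"] xy by simp
      next
        case False2: False
        show ?thesis unfolding q f_def using False False2 a b by simp
      qed
    qed
  qed
  have "path_strength v ps \<le> path_strength v qs"
    unfolding path_strength_def
  proof (rule Min.boundedI[OF edges_fin])
    have "Suc 0 < length qs" using len unfolding qs_def by simp
    then show "{v (qs ! i) (qs ! Suc i) |i. Suc i < length qs} \<noteq> {}" by blast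
    fix e assume "e \<in> {v (qs ! i) (qs ! Suc i) |i. Suc i < length qs}"
    then obtain i where i: "Suc i < length ps" and e: "e = v (qs ! i) (qs ! Suc i)"
      unfolding qs_def by auto
    have "Min {v (ps ! i) (ps ! Suc i) |i. Suc i < length ps} \<le> v (ps ! i) (ps ! Suc i)"
      using i by (intro Min_le[OF edges_fin]) auto
    also have "\<dots> \<le> e" using edge[OF i] e by simp
    finally show "Min {v (ps ! i) (ps ! Suc i) |i. Suc i < length ps} \<le> e" .
  qed
  ultimately show ?thesis by blast
qed


lemma geq_extend:
  assumes P: "is_path A ys y z" and C: "\<forall>i. Suc i < length ys \<longrightarrow> Q (ys ! i) (ys ! Suc i)"
    and Qxy: "Q x y" and xA: "x \<in> A" and zx: "z \<noteq> x"
  shows "\<exists>ws. is_path A ws x z \<and> (\<forall>i. Suc i < length ws \<longrightarrow> Q (ws ! i) (ws ! Suc i))"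
proof -
  have len: "length ys \<ge> 2" and dist: "distinct ys" and sA: "set ys \<subseteq> A"
    and h: "hd ys = y" and l: "last ys = z" using P unfolding is_path_def by auto
  have ne: "ys \<noteq> []" using len by auto
  show ?thesis
  proof (cases "x \<in> set ys")
    case False
    let ?ws = "x # ys"
    have "is_path A ?ws x z" unfolding is_path_def using len dist sA l ne False xA by auto
    moreover have "\<forall>i. Suc i < length ?ws \<longrightarrow> Q (?ws ! i) (?ws ! Suc i)"
    proof (intro allI impI)
      fix i assume i: "Suc i < length ?ws"
      show "Q (?ws ! i) (?ws ! Suc i)"
      proof (cases i)
        case 0
        then show ?thesis using Qxy h ne by (simp add: hd_conv_nth)
      next
        case (Suc j)
        then show ?thesis using C i by simp
      qed
    qed
    ultimately show ?thesis by blast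
  next
    case True
    then obtain k where k: "k < length ys" "ys ! k = x" unfolding in_set_conv_nth by blast
    let ?ws = "drop k ys"
    have "k \<noteq> length ys - 1"
    proof
      assume "k = length ys - 1"
      then have "ys ! k = last ys" using ne by (simp add: last_conv_nth)
      then show False using k l zx by simp
    qed
    then have lw: "length ?ws \<ge> 2" using k by simp
    have "hd ?ws = x" using hd_drop_conv_nth[OF k(1)] k(2) by simp
    moreover have "last ?ws = z" using k l by simp
    moreover have "distinct ?ws" using dist by simp
    moreover have "set ?ws \<subseteq> A" using sA set_drop_subset[of k ys] by (rule order_trans[rotated])
    ultimately have "is_path A ?ws x z" unfolding is_path_def using lw by blast
    moreover have "\<forall>i. Suc i < length ?ws \<longrightarrow> Q (?ws ! i) (?ws ! Suc i)"
    proof (intro allI impI)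
      fix i assume i: "Suc i < length ?ws"
      then have "Suc (k + i) < length ys" by simp
      then have "Q (ys ! (k + i)) (ys ! Suc (k + i))" using C by blast
      moreover have "?ws ! i = ys ! (k + i)" "?ws ! Suc i = ys ! Suc (k + i)"
        using k(1) i by auto
      ultimately show "Q (?ws ! i) (?ws ! Suc i)" by simp
    qed
    ultimately show ?thesis by blast
  qed
qed

theorem corollary4p2:
  fixes A :: "'a set" and vs :: "('a \<times> 'a) set list" and x y :: 'a
  assumes "finite A"
    and "length vs \<ge> 1"
    and "\<forall>R \<in> set vs. truncated_ranking A R"
    and "x \<in> A" and "y \<in> A"
    and "pareto_dominates vs x y"
    and "y \<in> path_top_choices A (llull vs)"
  shows "x \<in> path_top_choices A (llull vs)"
proof -
  note fin = assms(1) and xA = assms(4) and yA = assms(5)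
  have H: "\<forall>R \<in> set vs. truncated_ranking A R \<and> (prefers R x y \<or> ties R x y)"
    using assms(3,6) unfolding pareto_dominates_def by blast
  have xy: "x \<noteq> y"
  proof
    assume "x = y"
    obtain R where "prefers R x y" using assms(6) unfolding pareto_dominates_def by blast
    then show False using \<open>x = y\<close> unfolding prefers_def by blast
  qed
  let ?v = "llull vs"
  have p1: "is_path A [y, x] y x" unfolding is_path_def using xA yA xy by simp
  obtain ps where ps: "is_path A ps y x" "path_score A ?v y x = path_strength ?v ps"
    using score_attained[OF fin p1] by blast
  obtain qs where qs: "is_path A qs x y" "path_strength ?v ps \<le> path_strength ?v qs"
    using swap_path[OF xA yA xy ll_left[OF H] ll_right[OF H] ll_xy[OF H] ps(1)] by blast
  have Qxy: "path_score A ?v x y \<ge> path_score A ?v y x"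
    using ps(2) qs(2) strength_le_score[OF fin qs(1), of ?v] by linarith
  have top: "\<forall>z\<in>A. z \<noteq> y \<longrightarrow> ranks_geq A ?v y z"
    using assms(7) unfolding path_top_choices_def by blast
  have "ranks_geq A ?v x z" if zA: "z \<in> A" and zx: "z \<noteq> x" for z
  proof (cases "z = y")
    case True
    have p2: "is_path A [x, y] x y" unfolding is_path_def using xA yA xy by simp
    have "\<forall>i. Suc i < length [x, y] \<longrightarrow>
        path_score A ?v ([x, y] ! i) ([x, y] ! Suc i) \<ge> path_score A ?v ([x, y] ! Suc i) ([x, y] ! i)"
      using Qxy by (auto simp: less_Suc_eq)
    then show ?thesis unfolding ranks_geq_def True using p2 by blast
  next
    case False
    then obtain ys where ys: "is_path A ys y z"
      "\<forall>i. Suc i < length ys \<longrightarrow>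
        path_score A ?v (ys ! i) (ys ! Suc i) \<ge> path_score A ?v (ys ! Suc i) (ys ! i)"
      using top zA unfolding ranks_geq_def by blast
    show ?thesis unfolding ranks_geq_def
      using geq_extend[OF ys(1) ys(2), of x, OF Qxy xA zx] by blast
  qed
  then show ?thesis unfolding path_top_choices_def using xA by blast
qed

end
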